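(* With probability at least $1-\delta/4$, for all $1\le t\le T$ and all $\mathbf{x}\in\mathcal{X}$, \[ |\mu_{\mathrm{fb}[t]}(\mathbf{x})-\widetilde\mu_{\mathrm{fb}[t]}(\mathbf{x})|\le 2\hat K_0\frac{t^2(L+1)\varepsilon}{\sigma^4}\Big(B'+\sigma\sqrt{2\log(4T/\delta)}\Big). \]
   Context: $\mathcal{X}$ is a finite subset of the unit ball of $\mathbb{R}^d$; $f:\mathcal{X}\to\mathbb{R}$ with $|f(\mathbf{x})|\le B'$; observations $y_\tau=f(\mathbf{x}_\tau)+\zeta_\tau$ with $\zeta_\tau\sim\mathcal{N}(0,\sigma^2)$ i.i.d.; $\delta\in(0,1)$, $T$ is the horizon. $k$ is the exact NTK with $k\le K_0$, $\widetilde k(\mathbf{x},\mathbf{x}')=\langle\nabla_\theta f(\mathbf{x};\theta_0),\nabla_\theta f(\mathbf{x}';\theta_0)\rangle$ the empirical NTK of a network with $L+1$ layers; assume $|\widetilde k-k|\le(L+1)\varepsilon$ on $\mathcal{X}\times\mathcal{X}$, $(L+1)\varepsilon\le1$, $\sigma^2\le1$, $\hat K_0=\max\{1,K_0\}$. Queries are indexed sequentially and $\mathrm{fb}[t]\le t-1$ is the number of observed queries when $\mathbf{x}_t$ is chosen. $\mu_{\mathrm{fb}[t]}(\mathbf{x})=\mathbf{k}_t(\mathbf{x})^\top(\mathbf{K}_t+\sigma^2I)^{-1}\mathbf{y}_t$ with $\mathbf{k}_t(\mathbf{x})=(k(\mathbf{x},\mathbf{x}_\tau))_{\tau\le\mathrm{fb}[t]}$,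 $\mathbf{K}_t=(k(\mathbf{x}_\tau,\mathbf{x}_{\tau'}))_{\tau,\tau'\le\mathrm{fb}[t]}$, $\mathbf{y}_t=(y_\tau)_{\tau\le\mathrm{fb}[t]}$; $\widetilde\mu_{\mathrm{fb}[t]}$ is defined identically with $\widetilde k$. *)

theory Defs
  imports "HOL-Probability.Probability" "Jordan_Normal_Form.Gauss_Jordan_Elimination"
begin

text \<open>Gram matrix of the first n observed queries xs 1, ..., xs n (JNF indices are 0-based).\<close>
definition gram_mat :: "('a \<Rightarrow> 'a \<Rightarrow> real) \<Rightarrow> (nat \<Rightarrow> 'a) \<Rightarrow> nat \<Rightarrow> real mat" where
  "gram_mat k xs n = mat n n (\<lambda>(i, j). k (xs (Suc i)) (xs (Suc j)))"

definition kern_vec :: "('a \<Rightarrow> 'a \<Rightarrow> real) \<Rightarrow> (nat \<Rightarrow> 'a) \<Rightarrow> nat \<Rightarrow> 'a \<Rightarrow> real vec" where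
  "kern_vec k xs n x = vec n (\<lambda>i. k x (xs (Suc i)))"

definition obs_vec :: "(nat \<Rightarrow> real) \<Rightarrow> nat \<Rightarrow> real vec" where
  "obs_vec ys n = vec n (\<lambda>i. ys (Suc i))"

definition post_mean ::
  "('a \<Rightarrow> 'a \<Rightarrow> real) \<Rightarrow> real \<Rightarrow> (nat \<Rightarrow> 'a) \<Rightarrow> (nat \<Rightarrow> real) \<Rightarrow> nat \<Rightarrow> 'a \<Rightarrow> real" where
  "post_mean k \<sigma> xs ys n x =
     scalar_prod (kern_vec k xs n x)
       (mult_mat_vec (the (mat_inverse (gram_mat k xs n + smult_mat (\<sigma>\<^sup>2) (one_mat n)))) (obs_vec ys n))"

definition psd_kernel_on :: "'a set \<Rightarrow> ('a \<Rightarrow> 'a \<Rightarrow> real) \<Rightarrow> bool" where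
  "psd_kernel_on X k \<longleftrightarrow>
     (\<forall>x\<in>X. \<forall>x'\<in>X. k x x' = k x' x) \<and>
     (\<forall>n (xs :: nat \<Rightarrow> 'a) (c :: nat \<Rightarrow> real). (\<forall>i<n. xs i \<in> X) \<longrightarrow>
        0 \<le> (\<Sum>i<n. \<Sum>j<n. c i * c j * k (xs i) (xs j)))"

end

theory Submission
  imports Defs
begin

lemma L2_abs: "L2_set (\<lambda>i. \<bar>v i\<bar>) A = L2_set v A"
  unfolding L2_set_def by simp

lemma L2_entry_bound:
  assumes "\<forall>i<n. \<bar>v i\<bar> \<le> c" "0 \<le> c"
  shows "L2_set v {..<n} \<le> sqrt (real n) * c"
proof -
  have "L2_set (\<lambda>i. \<bar>v i\<bar>) {..<n} \<le> L2_set (\<lambda>_. c) {..<n}"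
    by (rule L2_set_mono) (use assms in auto)
  also have "\<dots> = sqrt (real n) * c" using assms(2) by (simp add: L2_set_constant)
  finally show ?thesis by (simp add: L2_abs)
qed

lemma CS_sum: "\<bar>\<Sum>i\<in>A. u i * v i\<bar> \<le> L2_set u A * L2_set v A"
proof -
  have "\<bar>\<Sum>i\<in>A. u i * v i\<bar> \<le> (\<Sum>i\<in>A. \<bar>u i * v i\<bar>)"
    by (rule sum_abs)
  also have "\<dots> = (\<Sum>i\<in>A. \<bar>u i\<bar> * \<bar>v i\<bar>)" by (simp add: abs_mult)
  also have "\<dots> \<le> L2_set u A * L2_set v A" by (rule L2_set_mult_ineq)
  finally show ?thesis .
qed

lemma L2_matvec:
  assumes "\<forall>i<n. \<forall>j<n. \<bar>D i j\<bar> \<le> e" "0 \<le> e"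
  shows "L2_set (\<lambda>i. \<Sum>j<n. D i j * v j) {..<n} \<le> real n * e * L2_set v {..<n}"
proof -
  have "\<forall>i<n. \<bar>\<Sum>j<n. D i j * v j\<bar> \<le> sqrt (real n) * e * L2_set v {..<n}"
  proof (intro allI impI)
    fix i assume i: "i < n"
    have "\<bar>\<Sum>j<n. D i j * v j\<bar> \<le> L2_set (D i) {..<n} * L2_set v {..<n}" by (rule CS_sum)
    also have "\<dots> \<le> sqrt (real n) * e * L2_set v {..<n}"
      by (rule mult_right_mono[OF L2_entry_bound]) (use assms i in auto)
    finally show "\<bar>\<Sum>j<n. D i j * v j\<bar> \<le> sqrt (real n) * e * L2_set v {..<n}" .
  qed
  then have "L2_set (\<lambda>i. \<Sum>j<n. D i j * v j) {..<n} \<le> sqrt (real n) * (sqrt (real n) * e * L2_set v {..<n})"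
    by (intro L2_entry_bound) (use assms in auto)
  also have "\<dots> = real n * e * L2_set v {..<n}" by simp
  finally show ?thesis .
qed

lemma PD_bound:
  assumes psd: "\<forall>c. 0 \<le> (\<Sum>i<n. \<Sum>j<n. c i * c j * K i j)"
    and eq: "\<forall>i<n. (\<Sum>j<n. K i j * v j) + s * v i = w i" and s: "0 < s"
  shows "L2_set v {..<n} \<le> L2_set w {..<n} / s"
proof -
  have pt: "\<And>i. i \<in> {..<n} \<Longrightarrow> v i * w i = v i * (\<Sum>j<n. K i j * v j) + s * (v i)\<^sup>2"
  proof -
    fix i assume "i \<in> {..<n}"
    then have "w i = (\<Sum>j<n. K i j * v j) + s * v i" using eq by auto
    then show "v i * w i = v i * (\<Sum>j<n. K i j * v j) + s * (v i)\<^sup>2"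
      by (simp add: algebra_simps power2_eq_square)
  qed
  have "(\<Sum>i<n. v i * w i) = (\<Sum>i<n. v i * (\<Sum>j<n. K i j * v j)) + s * (\<Sum>i<n. (v i)\<^sup>2)"
  proof -
    have "(\<Sum>i<n. v i * w i) = (\<Sum>i<n. v i * (\<Sum>j<n. K i j * v j) + s * (v i)\<^sup>2)"
      by (rule sum.cong[OF refl pt])
    also have "\<dots> = (\<Sum>i<n. v i * (\<Sum>j<n. K i j * v j)) + s * (\<Sum>i<n. (v i)\<^sup>2)"
      by (simp add: sum.distrib sum_distrib_left)
    finally show ?thesis .
  qed
  also have "(\<Sum>i<n. v i * (\<Sum>j<n. K i j * v j)) = (\<Sum>i<n. \<Sum>j<n. v i * v j * K i j)"
    by (simp add: sum_distrib_left algebra_simps)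
  finally have e1: "(\<Sum>i<n. v i * w i) = (\<Sum>i<n. \<Sum>j<n. v i * v j * K i j) + s * (L2_set v {..<n})\<^sup>2"
    by (simp add: L2_set_def sum_nonneg)
  have "s * (L2_set v {..<n})\<^sup>2 \<le> (\<Sum>i<n. v i * w i)" proof -
    have "0 \<le> (\<Sum>i<n. \<Sum>j<n. v i * v j * K i j)" using psd by blast
    then show ?thesis using e1 by linarith
  qed
  also have "\<dots> \<le> L2_set v {..<n} * L2_set w {..<n}" using CS_sum[of v w "{..<n}"] by linarith
  finally have h: "s * (L2_set v {..<n})\<^sup>2 \<le> L2_set v {..<n} * L2_set w {..<n}" .
  show ?thesis
  proof (cases "L2_set v {..<n} = 0")
    case True then show ?thesis using s by simp
  next
    case False
    then have p: "0 < L2_set v {..<n}" using L2_set_nonneg[of v "{..<n}"] by linarith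
    from h have "L2_set v {..<n} * (s * L2_set v {..<n}) \<le> L2_set v {..<n} * L2_set w {..<n}"
      by (simp add: power2_eq_square algebra_simps)
    then have "s * L2_set v {..<n} \<le> L2_set w {..<n}" using p by simp
    then show ?thesis using s by (simp add: field_simps)
  qed
qed

lemma core_bound:
  fixes Ka Kb :: "nat \<Rightarrow> nat \<Rightarrow> real" and \<alpha> \<beta> y ka kb :: "nat \<Rightarrow> real"
  assumes psdA: "\<forall>c. 0 \<le> (\<Sum>i<n. \<Sum>j<n. c i * c j * Ka i j)"
    and psdB: "\<forall>c. 0 \<le> (\<Sum>i<n. \<Sum>j<n. c i * c j * Kb i j)"
    and eqA: "\<forall>i<n. (\<Sum>j<n. Ka i j * \<alpha> j) + s * \<alpha> i = y i"
    and eqB: "\<forall>i<n. (\<Sum>j<n. Kb i j * \<beta> j) + s * \<beta> i = y i"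
    and dK: "\<forall>i<n. \<forall>j<n. \<bar>Kb i j - Ka i j\<bar> \<le> e"
    and dk: "\<forall>i<n. \<bar>kb i - ka i\<bar> \<le> e"
    and bk: "\<forall>i<n. \<bar>ka i\<bar> \<le> K0"
    and hy: "\<forall>i<n. \<bar>y i\<bar> \<le> Y"
    and s: "0 < s" "s \<le> 1" and e: "0 \<le> e" "e \<le> 1" and Y: "0 \<le> Y" and K0: "0 \<le> K0"
    and nt: "Suc n \<le> t"
  shows "\<bar>(\<Sum>i<n. ka i * \<alpha> i) - (\<Sum>i<n. kb i * \<beta> i)\<bar>
          \<le> 2 * max 1 K0 * (real t ^ 2 * e / s\<^sup>2) * Y"
proof -
  let ?N = "\<lambda>v. L2_set v {..<n}"
  let ?r = "sqrt (real n)"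
  have rr: "?r * ?r = real n" by simp
  have r0: "0 \<le> ?r" by simp
  have Ny: "?N y \<le> ?r * Y" by (rule L2_entry_bound) (use hy Y in auto)
  have Na: "?N \<alpha> \<le> ?r * Y / s"
    using PD_bound[OF psdA eqA s(1)] Ny s(1) by (meson divide_right_mono less_imp_le order_trans)
  have Nb: "?N \<beta> \<le> ?r * Y / s"
    using PD_bound[OF psdB eqB s(1)] Ny s(1) by (meson divide_right_mono less_imp_le order_trans)
  define \<gamma> where "\<gamma> i = \<alpha> i - \<beta> i" for i
  have eqG: "\<forall>i<n. (\<Sum>j<n. Ka i j * \<gamma> j) + s * \<gamma> i = (\<Sum>j<n. (Kb i j - Ka i j) * \<beta> j)"
  proof (intro allI impI)
    fix i assume i: "i < n"
    have "(\<Sum>j<n. Ka i j * \<gamma> j) + s * \<gamma> i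
       = ((\<Sum>j<n. Ka i j * \<alpha> j) + s * \<alpha> i) - ((\<Sum>j<n. Ka i j * \<beta> j) + s * \<beta> i)"
      by (simp add: \<gamma>_def algebra_simps sum_subtractf)
    also have "\<dots> = ((\<Sum>j<n. Kb i j * \<beta> j) + s * \<beta> i) - ((\<Sum>j<n. Ka i j * \<beta> j) + s * \<beta> i)"
      using eqA eqB i by simp
    also have "\<dots> = (\<Sum>j<n. (Kb i j - Ka i j) * \<beta> j)"
      by (simp add: algebra_simps sum_subtractf)
    finally show "(\<Sum>j<n. Ka i j * \<gamma> j) + s * \<gamma> i = (\<Sum>j<n. (Kb i j - Ka i j) * \<beta> j)" .
  qed
  have NG1: "?N \<gamma> \<le> ?N (\<lambda>i. \<Sum>j<n. (Kb i j - Ka i j) * \<beta> j) / s"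
    by (rule PD_bound[OF psdA eqG s(1)])
  have NG2: "?N (\<lambda>i. \<Sum>j<n. (Kb i j - Ka i j) * \<beta> j) \<le> real n * e * ?N \<beta>"
    by (rule L2_matvec) (use dK e in auto)
  have NG: "?N \<gamma> \<le> real n * e * (?r * Y / s) / s"
  proof -
    have "?N \<gamma> \<le> real n * e * ?N \<beta> / s" using NG1 NG2 s(1)
      by (meson divide_right_mono less_imp_le order_trans)
    also have "\<dots> \<le> real n * e * (?r * Y / s) / s"
      using Nb e s(1) by (intro divide_right_mono mult_left_mono) auto
    finally show ?thesis .
  qed
  have Ndk: "?N (\<lambda>i. ka i - kb i) \<le> ?r * e"
    by (rule L2_entry_bound) (use dk e in \<open>auto simp: abs_minus_commute\<close>)
  have Nkb: "?N kb \<le> ?r * (K0 + e)"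
  proof (rule L2_entry_bound)
    show "\<forall>i<n. \<bar>kb i\<bar> \<le> K0 + e"
    proof (intro allI impI)
      fix i assume "i < n"
      then have "\<bar>kb i - ka i\<bar> \<le> e" "\<bar>ka i\<bar> \<le> K0" using dk bk by auto
      then show "\<bar>kb i\<bar> \<le> K0 + e" by linarith
    qed
  qed (use K0 e in auto)
  have split: "(\<Sum>i<n. ka i * \<alpha> i) - (\<Sum>i<n. kb i * \<beta> i)
      = (\<Sum>i<n. (ka i - kb i) * \<alpha> i) + (\<Sum>i<n. kb i * \<gamma> i)"
    by (simp add: \<gamma>_def algebra_simps sum_subtractf sum.distrib)
  have T1: "\<bar>\<Sum>i<n. (ka i - kb i) * \<alpha> i\<bar> \<le> (?r * e) * (?r * Y / s)"
  proof -
    have "\<bar>\<Sum>i<n. (ka i - kb i) * \<alpha> i\<bar> \<le> ?N (\<lambda>i. ka i - kb i) * ?N \<alpha>" by (rule CS_sum)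
    also have "\<dots> \<le> (?r * e) * (?r * Y / s)"
      by (rule mult_mono[OF Ndk Na]) (use e in auto)
    finally show ?thesis .
  qed
  have T2: "\<bar>\<Sum>i<n. kb i * \<gamma> i\<bar> \<le> (?r * (K0 + e)) * (real n * e * (?r * Y / s) / s)"
  proof -
    have "\<bar>\<Sum>i<n. kb i * \<gamma> i\<bar> \<le> ?N kb * ?N \<gamma>" by (rule CS_sum)
    also have "\<dots> \<le> (?r * (K0 + e)) * (real n * e * (?r * Y / s) / s)"
      by (rule mult_mono[OF Nkb NG]) (use e K0 in auto)
    finally show ?thesis .
  qed
  have E1: "(?r * e) * (?r * Y / s) = real n * e * Y / s"
  proof -
    have "(?r * e) * (?r * Y / s) = (?r * ?r) * e * Y / s" by (simp add: algebra_simps)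
    then show ?thesis by (simp only: rr)
  qed
  have E2: "(?r * (K0 + e)) * (real n * e * (?r * Y / s) / s) = real n ^ 2 * (K0 + e) * e * Y / s\<^sup>2"
  proof -
    have "(?r * (K0 + e)) * (real n * e * (?r * Y / s) / s) = (?r * ?r) * real n * (K0 + e) * e * Y / (s * s)"
      by (simp add: algebra_simps)
    then show ?thesis by (simp only: rr power2_eq_square)
  qed
  let ?H = "max 1 K0"
  have A1: "real n * e * Y / s \<le> real n * e * Y / s\<^sup>2"
  proof -
    have "s\<^sup>2 \<le> s" using s by (simp add: power2_eq_square mult_le_cancel_right1)
    then have "1 / s \<le> 1 / s\<^sup>2" using s by (intro divide_left_mono) auto
    then show ?thesis using e Y by (simp add: divide_inverse mult_left_mono)
  qed
  have A2: "real n ^ 2 * (K0 + e) * e * Y / s\<^sup>2 \<le> real n ^ 2 * (2 * ?H) * e * Y / s\<^sup>2"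
  proof -
    have "K0 + e \<le> 2 * ?H" using e by linarith
    then show ?thesis using e Y s
      by (intro divide_right_mono mult_right_mono mult_left_mono) auto
  qed
  have A3: "real n + real n ^ 2 * (2 * ?H) \<le> 2 * ?H * real t ^ 2"
  proof -
    have "real n + 1 \<le> real t" using nt by simp
    then have "(real n + 1)^2 \<le> real t ^ 2" by (intro power_mono) auto
    then have "2 * ?H * (real n + 1)^2 \<le> 2 * ?H * real t ^ 2" by (intro mult_left_mono) auto
    moreover have "real n + real n ^ 2 * (2 * ?H) \<le> 2 * ?H * (real n + 1)^2"
    proof -
      have H1: "1 \<le> ?H" by simp
      have "2 * 1 * (2 * real n + 1) \<le> 2 * ?H * (2 * real n + 1)"
        using H1 by (intro mult_right_mono mult_left_mono) auto
      moreover have "real n \<le> 2 * 1 * (2 * real n + 1)" by simp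
      ultimately have "real n \<le> 2 * ?H * (2 * real n + 1)" by (rule order_trans[rotated])
      then show ?thesis by (simp add: power2_eq_square algebra_simps)
    qed
    ultimately show ?thesis by linarith
  qed
  have "\<bar>(\<Sum>i<n. ka i * \<alpha> i) - (\<Sum>i<n. kb i * \<beta> i)\<bar>
      \<le> real n * e * Y / s\<^sup>2 + real n ^ 2 * (2 * ?H) * e * Y / s\<^sup>2"
  proof -
    have "\<bar>(\<Sum>i<n. ka i * \<alpha> i) - (\<Sum>i<n. kb i * \<beta> i)\<bar>
       \<le> \<bar>\<Sum>i<n. (ka i - kb i) * \<alpha> i\<bar> + \<bar>\<Sum>i<n. kb i * \<gamma> i\<bar>"
      unfolding split by (rule abs_triangle_ineq)
    then show ?thesis using T1 T2 E1 E2 A1 A2 by linarith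
  qed
  also have "\<dots> = (real n + real n ^ 2 * (2 * ?H)) * (e * Y / s\<^sup>2)" by (simp add: algebra_simps)
  also have "\<dots> \<le> 2 * ?H * real t ^ 2 * (e * Y / s\<^sup>2)"
    using A3 e Y by (intro mult_right_mono) auto
  also have "\<dots> = 2 * max 1 K0 * (real t ^ 2 * e / s\<^sup>2) * Y" by simp
  finally show ?thesis .
qed

lemma post_mean_sol:
  fixes kk :: "'a \<Rightarrow> 'a \<Rightarrow> real" and xs :: "nat \<Rightarrow> 'a" and ys :: "nat \<Rightarrow> real"
  assumes psd: "\<forall>c. 0 \<le> (\<Sum>i<n. \<Sum>j<n. c i * c j * kk (xs (Suc i)) (xs (Suc j)))"
    and sg: "0 < \<sigma>"
  shows "\<exists>\<alpha>. (\<forall>i<n. (\<Sum>j<n. kk (xs (Suc i)) (xs (Suc j)) * \<alpha> j) + \<sigma>\<^sup>2 * \<alpha> i = ys (Suc i))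
            \<and> post_mean kk \<sigma> xs ys n x = (\<Sum>i<n. kk x (xs (Suc i)) * \<alpha> i)"
proof -
  define A where "A = gram_mat kk xs n + smult_mat (\<sigma>\<^sup>2) (one_mat n)"
  have A: "A \<in> carrier_mat n n" by (simp add: A_def gram_mat_def)
  have Aij: "A $$ (i, j) = kk (xs (Suc i)) (xs (Suc j)) + (if i = j then \<sigma>\<^sup>2 else 0)"
    if "i < n" "j < n" for i j
    using that by (simp add: A_def gram_mat_def)
  have rowsum: "(A *\<^sub>v v) $ i = (\<Sum>j<n. kk (xs (Suc i)) (xs (Suc j)) * v $ j) + \<sigma>\<^sup>2 * v $ i"
    if "i < n" "v \<in> carrier_vec n" for i v
  proof -
    have "(A *\<^sub>v v) $ i = (\<Sum>j\<in>{0..<n}. A $$ (i, j) * v $ j)"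
      using that A by (simp add: scalar_prod_def)
    also have "\<dots> = (\<Sum>j<n. kk (xs (Suc i)) (xs (Suc j)) * v $ j + (if i = j then \<sigma>\<^sup>2 * v $ j else 0))"
      unfolding atLeast0LessThan
    proof (rule sum.cong[OF refl])
      fix j assume "j \<in> {..<n}"
      then have "A $$ (i, j) = kk (xs (Suc i)) (xs (Suc j)) + (if i = j then \<sigma>\<^sup>2 else 0)"
        using Aij that(1) by blast
      then show "A $$ (i, j) * v $ j = kk (xs (Suc i)) (xs (Suc j)) * v $ j + (if i = j then \<sigma>\<^sup>2 * v $ j else 0)"
        by (simp add: distrib_right)
    qed
    also have "\<dots> = (\<Sum>j<n. kk (xs (Suc i)) (xs (Suc j)) * v $ j) + \<sigma>\<^sup>2 * v $ i"
      using that by (simp add: sum.distrib)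
    finally show ?thesis .
  qed
  have s0: "0 < \<sigma>\<^sup>2" using sg by simp
  have inj: "v = 0\<^sub>v n" if v: "v \<in> carrier_vec n" "A *\<^sub>v v = 0\<^sub>v n" for v
  proof -
    have eq: "\<forall>i<n. (\<Sum>j<n. kk (xs (Suc i)) (xs (Suc j)) * v $ j) + \<sigma>\<^sup>2 * v $ i = (\<lambda>_. 0) i"
    proof (intro allI impI)
      fix i assume i: "i < n"
      have "(A *\<^sub>v v) $ i = 0" using v(2) i by simp
      then show "(\<Sum>j<n. kk (xs (Suc i)) (xs (Suc j)) * v $ j) + \<sigma>\<^sup>2 * v $ i = (\<lambda>_. 0) i"
        using rowsum[OF i v(1)] by simp
    qed
    have "L2_set (\<lambda>i. v $ i) {..<n} \<le> L2_set (\<lambda>_. 0) {..<n} / \<sigma>\<^sup>2"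
      by (rule PD_bound[OF psd eq s0])
    then have "L2_set (\<lambda>i. v $ i) {..<n} = 0" using L2_set_nonneg[of "\<lambda>i. v $ i" "{..<n}"]
      by (simp add: L2_set_def)
    then have "\<forall>i\<in>{..<n}. v $ i = 0" by (simp add: L2_set_eq_0_iff)
    then show "v = 0\<^sub>v n" using v(1) by (intro eq_vecI) auto
  qed
  obtain BB CC where g: "gauss_jordan A (1\<^sub>m n) = (BB, CC)" by (cases "gauss_jordan A (1\<^sub>m n)")
  have BB1: "BB = 1\<^sub>m n"
  proof (rule ccontr)
    assume nb: "BB \<noteq> 1\<^sub>m n"
    have ref: "row_echelon_form BB" by (rule gauss_jordan_row_echelon[OF A g])
    have BBc: "BB \<in> carrier_mat n n" using gauss_jordan(3)[OF A one_carrier_mat g] by auto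
    note fb = find_base_vector_not_1[OF ref BBc nb]
    have "A *\<^sub>v find_base_vector BB = 0\<^sub>v n"
      using gauss_jordan(1)[OF A one_carrier_mat g fb(1)] fb(3) by auto
    then have "find_base_vector BB = 0\<^sub>v n" using inj fb(1) by blast
    with fb(2) show False by simp
  qed
  have B: "mat_inverse A = Some CC"
    using A g BB1 unfolding mat_inverse_def by (simp add: Let_def)
  define B where "B = CC"
  note B = B[folded B_def]
  have AB: "A * B = 1\<^sub>m n" and Bc: "B \<in> carrier_mat n n" using mat_inverse(2)[OF A B] by auto
  define a where "a = B *\<^sub>v obs_vec ys n"
  have yv: "obs_vec ys n \<in> carrier_vec n" by (simp add: obs_vec_def)
  have ac: "a \<in> carrier_vec n" using Bc yv by (simp add: a_def)
  have Aa: "A *\<^sub>v a = obs_vec ys n"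
  proof -
    have "A *\<^sub>v a = (A * B) *\<^sub>v obs_vec ys n" unfolding a_def
      by (rule assoc_mult_mat_vec[OF A Bc yv, symmetric])
    also have "\<dots> = obs_vec ys n" unfolding AB using yv by (rule one_mult_mat_vec)
    finally show ?thesis .
  qed
  show ?thesis
  proof (intro exI conjI allI impI)
    fix i assume i: "i < n"
    have "ys (Suc i) = (A *\<^sub>v a) $ i" using i by (simp add: Aa obs_vec_def)
    then show "(\<Sum>j<n. kk (xs (Suc i)) (xs (Suc j)) * a $ j) + \<sigma>\<^sup>2 * a $ i = ys (Suc i)"
      using rowsum[OF i ac] by simp
  next
    have "post_mean kk \<sigma> xs ys n x = scalar_prod (kern_vec kk xs n x) a"
      unfolding post_mean_def A_def[symmetric] B option.sel a_def[symmetric] ..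
    also have "\<dots> = (\<Sum>i\<in>{0..<n}. kern_vec kk xs n x $ i * a $ i)"
      using ac by (simp add: scalar_prod_def)
    also have "\<dots> = (\<Sum>i<n. kk x (xs (Suc i)) * a $ i)"
      by (simp add: kern_vec_def atLeast0LessThan)
    finally show "post_mean kk \<sigma> xs ys n x = (\<Sum>i<n. kk x (xs (Suc i)) * a $ i)" .
  qed
qed

lemma tail_one:
  assumes P: "prob_space M" and D: "distributed M lborel Z (normal_density 0 \<sigma>)"
    and sg: "0 < \<sigma>" and c: "0 < c"
  shows "measure M (Z -` {c..} \<inter> space M) \<le> \<sigma>\<^sup>2 / c * normal_density 0 \<sigma> c"
proof -
  interpret prob_space M by fact
  define C where "C = 1 / sqrt (2 * pi * \<sigma>\<^sup>2)"
  have nd: "normal_density 0 \<sigma> x = C * exp (- (x\<^sup>2 / (2 * \<sigma>\<^sup>2)))" for x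
    by (simp add: normal_density_def C_def)
  define F where "F x = - (\<sigma>\<^sup>2 / c * C * exp (- (x\<^sup>2 / (2 * \<sigma>\<^sup>2))))" for x
  define f where "f x = x / c * normal_density 0 \<sigma> x" for x
  have "emeasure M (Z -` {c..} \<inter> space M)
      = (\<integral>\<^sup>+x. ennreal (normal_density 0 \<sigma> x) * indicator {c..} x \<partial>lborel)"
    by (rule distributed_emeasure[OF D]) simp
  also have "\<dots> \<le> (\<integral>\<^sup>+x. ennreal (f x) * indicator {c..} x \<partial>lborel)"
  proof (rule nn_integral_mono)
    fix x :: real
    show "ennreal (normal_density 0 \<sigma> x) * indicator {c..} x \<le> ennreal (f x) * indicator {c..} x"
    proof (cases "c \<le> x")
      case True
      then have "1 \<le> x / c" using c by simp
      then have "1 * normal_density 0 \<sigma> x \<le> x / c * normal_density 0 \<sigma> x"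
        by (intro mult_right_mono) auto
      then show ?thesis using True by (simp add: f_def ennreal_leI)
    next
      case False then show ?thesis by simp
    qed
  qed
  also have "\<dots> = ennreal (0 - F c)"
  proof (rule nn_integral_FTC_atLeast)
    show "f \<in> borel_measurable borel" unfolding f_def by measurable
  next
    fix x :: real
    have "(F has_real_derivative
        - (\<sigma>\<^sup>2 / c * C * (exp (- (x\<^sup>2 / (2 * \<sigma>\<^sup>2))) * (- (2 * x / (2 * \<sigma>\<^sup>2)))))) (at x)"
      unfolding F_def using sg c by (auto intro!: derivative_eq_intros simp: field_simps)
    moreover have "- (\<sigma>\<^sup>2 / c * C * (exp (- (x\<^sup>2 / (2 * \<sigma>\<^sup>2))) * (- (2 * x / (2 * \<sigma>\<^sup>2))))) = f x"
    proof -
      have "c \<noteq> 0" "\<sigma> \<noteq> 0" using sg c by auto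
      then show ?thesis by (simp add: f_def nd field_simps)
    qed
    ultimately show "(F has_real_derivative f x) (at x)" by simp
  next
    fix x assume "c \<le> x"
    then show "0 \<le> f x" using c by (simp add: f_def)
  next
    have lim: "filterlim (\<lambda>x::real. x\<^sup>2 * (1 / (2 * \<sigma>\<^sup>2))) at_top at_top"
      by (rule filterlim_at_top_mult_tendsto_pos[OF tendsto_const])
         (use sg in \<open>auto intro!: filterlim_pow_at_top filterlim_ident\<close>)
    have "((\<lambda>x::real. exp (- (x\<^sup>2 * (1 / (2 * \<sigma>\<^sup>2))))) \<longlongrightarrow> 0) at_top"
      by (rule filterlim_compose[OF exp_at_bot filterlim_compose[OF filterlim_uminus_at_bot_at_top lim]])
    then have "((\<lambda>x::real. exp (- (x\<^sup>2 / (2 * \<sigma>\<^sup>2)))) \<longlongrightarrow> 0) at_top" by simp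
    then have "((\<lambda>x. - (\<sigma>\<^sup>2 / c * C * exp (- (x\<^sup>2 / (2 * \<sigma>\<^sup>2))))) \<longlongrightarrow> - (\<sigma>\<^sup>2 / c * C * 0)) at_top"
      by (intro tendsto_intros)
    then show "(F \<longlongrightarrow> 0) at_top" unfolding F_def[abs_def] by simp
  qed
  also have "0 - F c = \<sigma>\<^sup>2 / c * normal_density 0 \<sigma> c" by (simp add: F_def nd)
  finally have "ennreal (measure M (Z -` {c..} \<inter> space M)) \<le> ennreal (\<sigma>\<^sup>2 / c * normal_density 0 \<sigma> c)"
    by (simp add: emeasure_eq_measure)
  then show ?thesis using c sg by (simp add: ennreal_le_iff)
qed

lemma tail_abs:
  assumes P: "prob_space M" and D: "distributed M lborel Z (normal_density 0 \<sigma>)"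
    and sg: "0 < \<sigma>" and c: "0 < c"
  shows "{\<omega>\<in>space M. c < \<bar>Z \<omega>\<bar>} \<in> sets M"
    "measure M {\<omega>\<in>space M. c < \<bar>Z \<omega>\<bar>} \<le> 2 * (\<sigma>\<^sup>2 / c * normal_density 0 \<sigma> c)"
proof -
  interpret prob_space M by fact
  have D': "distributed M lborel (\<lambda>x. 0 + (-1) * Z x) (normal_density (0 + (-1) * 0) (\<bar>-1\<bar> * \<sigma>))"
    by (rule normal_density_affine[OF D sg]) simp
  then have D2: "distributed M lborel (\<lambda>x. - Z x) (normal_density 0 \<sigma>)" by simp
  have mZ: "Z \<in> borel_measurable M" using distributed_measurable[OF D] by simp
  show S: "{\<omega>\<in>space M. c < \<bar>Z \<omega>\<bar>} \<in> sets M" using mZ by measurable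
  have S1: "Z -` {c..} \<inter> space M \<in> sets M" using mZ by measurable
  have S2: "(\<lambda>x. - Z x) -` {c..} \<inter> space M \<in> sets M" using mZ by measurable
  have sub: "{\<omega>\<in>space M. c < \<bar>Z \<omega>\<bar>} \<subseteq> (Z -` {c..} \<inter> space M) \<union> ((\<lambda>x. - Z x) -` {c..} \<inter> space M)"
    by auto
  have "measure M {\<omega>\<in>space M. c < \<bar>Z \<omega>\<bar>} \<le> measure M ((Z -` {c..} \<inter> space M) \<union> ((\<lambda>x. - Z x) -` {c..} \<inter> space M))"
    by (rule finite_measure_mono[OF sub]) (use S1 S2 in auto)
  also have "\<dots> \<le> measure M (Z -` {c..} \<inter> space M) + measure M ((\<lambda>x. - Z x) -` {c..} \<inter> space M)"
    by (rule measure_Un_le[OF S1 S2])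
  also have "\<dots> \<le> \<sigma>\<^sup>2 / c * normal_density 0 \<sigma> c + \<sigma>\<^sup>2 / c * normal_density 0 \<sigma> c"
    by (intro add_mono tail_one[OF P D sg c] tail_one[OF P D2 sg c])
  finally show "measure M {\<omega>\<in>space M. c < \<bar>Z \<omega>\<bar>} \<le> 2 * (\<sigma>\<^sup>2 / c * normal_density 0 \<sigma> c)"
    by (simp add: ac_simps)
qed

lemma gram_psd:
  fixes g :: "nat \<Rightarrow> 'p :: real_inner"
  shows "0 \<le> (\<Sum>i<n. \<Sum>j<n. cc i * cc j * inner (g i) (g j))"
proof -
  have "inner (\<Sum>i<n. cc i *\<^sub>R g i) (\<Sum>j<n. cc j *\<^sub>R g j)
      = (\<Sum>i<n. inner (cc i *\<^sub>R g i) (\<Sum>j<n. cc j *\<^sub>R g j))"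
    by (rule inner_sum_left)
  also have "\<dots> = (\<Sum>i<n. \<Sum>j<n. inner (cc i *\<^sub>R g i) (cc j *\<^sub>R g j))"
    by (simp only: inner_sum_right)
  also have "\<dots> = (\<Sum>i<n. \<Sum>j<n. cc i * cc j * inner (g i) (g j))"
    by (simp add: ac_simps)
  finally have "(\<Sum>i<n. \<Sum>j<n. cc i * cc j * inner (g i) (g j))
      = inner (\<Sum>i<n. cc i *\<^sub>R g i) (\<Sum>j<n. cc j *\<^sub>R g j)" by simp
  then show ?thesis by simp
qed

lemma psd_entry_bound:
  assumes psd: "psd_kernel_on X k" and K: "\<forall>x\<in>X. \<forall>x'\<in>X. k x x' \<le> K0"
    and a: "a \<in> X" and b: "b \<in> X"
  shows "\<bar>k a b\<bar> \<le> K0"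
proof -
  define xs :: "nat \<Rightarrow> 'a" where "xs i = (if i = 0 then a else b)" for i
  have xsX: "\<forall>i<2. xs i \<in> X" using a b by (simp add: xs_def)
  have q: "0 \<le> (\<Sum>i<2. \<Sum>j<2. cc i * cc j * k (xs i) (xs j))" for cc
    using psd xsX unfolding psd_kernel_on_def by blast
  have sym: "k b a = k a b" using psd a b unfolding psd_kernel_on_def by blast
  have two: "(\<Sum>i<(2::nat). g i) = g 0 + g 1" for g :: "nat \<Rightarrow> real"
    by (simp add: numeral_2_eq_2)
  have q1: "0 \<le> k a a - k a b - k b a + k b b"
    using q[of "\<lambda>i. if i = 0 then 1 else -1"] by (simp add: two xs_def)
  have q2: "0 \<le> k a a + k a b + k b a + k b b"
    using q[of "\<lambda>i. 1"] by (simp add: two xs_def)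
  have "k a a \<le> K0" "k b b \<le> K0" using K a b by auto
  then show ?thesis using q1 q2 sym by linarith
qed

lemma psd_diag:
  assumes psd: "psd_kernel_on X k" and a: "a \<in> X"
  shows "0 \<le> k a a"
proof -
  define xs :: "nat \<Rightarrow> 'a" where "xs i = a" for i
  have xsX: "\<forall>i<2. xs i \<in> X" using a by (simp add: xs_def)
  have q: "0 \<le> (\<Sum>i<2. \<Sum>j<2. cc i * cc j * k (xs i) (xs j))" for cc
    using psd xsX unfolding psd_kernel_on_def by blast
  have two: "(\<Sum>i<(2::nat). g i) = g 0 + g 1" for g :: "nat \<Rightarrow> real"
    by (simp add: numeral_2_eq_2)
  have "0 \<le> k a a + k a a + k a a + k a a"
    using q[of "\<lambda>i. 1"] by (simp add: two xs_def)
  then show ?thesis by linarith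
qed

theorem lemma10:
  fixes M :: "'w measure"
    and X :: "'a :: euclidean_space set"
    and f :: "'a \<Rightarrow> real"
    and B' \<sigma> \<delta> K\<^sub>0 \<epsilon> :: real
    and L T :: nat
    and k :: "'a \<Rightarrow> 'a \<Rightarrow> real"
    and grad :: "'a \<Rightarrow> 'p :: real_inner"
    and \<zeta> :: "nat \<Rightarrow> 'w \<Rightarrow> real"
    and xq :: "nat \<Rightarrow> 'w \<Rightarrow> 'a"
    and fb :: "nat \<Rightarrow> 'w \<Rightarrow> nat"
  assumes "prob_space M"
    and "finite X" and "X \<subseteq> cball 0 1"
    and "\<forall>x\<in>X. \<bar>f x\<bar> \<le> B'"
    and "0 < \<sigma>" and "\<sigma>\<^sup>2 \<le> 1"
    and "0 < \<delta>" and "\<delta> < 1"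
    and "prob_space.indep_vars M (\<lambda>_. borel) \<zeta> {1..T}"
    and "\<forall>\<tau>\<in>{1..T}. distributed M lborel (\<zeta> \<tau>) (normal_density 0 \<sigma>)"
    and "psd_kernel_on X k"
    and "\<forall>x\<in>X. \<forall>x'\<in>X. k x x' \<le> K\<^sub>0"
    and "\<forall>x\<in>X. \<forall>x'\<in>X. \<bar>inner (grad x) (grad x') - k x x'\<bar> \<le> (real L + 1) * \<epsilon>"
    and "(real L + 1) * \<epsilon> \<le> 1"
    and "\<forall>t\<in>{1..T}. \<forall>\<omega>\<in>space M. xq t \<omega> \<in> X"
    and "\<forall>t\<in>{1..T}. \<forall>\<omega>\<in>space M. fb t \<omega> \<le> t - 1"
  shows "\<exists>E\<in>sets M. measure M E \<ge> 1 - \<delta> / 4 \<and>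
           (\<forall>\<omega>\<in>E. \<forall>t\<in>{1..T}. \<forall>x\<in>X.
              \<bar>post_mean k \<sigma> (\<lambda>\<tau>. xq \<tau> \<omega>) (\<lambda>\<tau>. f (xq \<tau> \<omega>) + \<zeta> \<tau> \<omega>) (fb t \<omega>) x
               - post_mean (\<lambda>x x'. inner (grad x) (grad x')) \<sigma> (\<lambda>\<tau>. xq \<tau> \<omega>)
                   (\<lambda>\<tau>. f (xq \<tau> \<omega>) + \<zeta> \<tau> \<omega>) (fb t \<omega>) x\<bar>
              \<le> 2 * max 1 K\<^sub>0 * (real t ^ 2 * ((real L + 1) * \<epsilon>) / \<sigma> ^ 4)
                  * (B' + \<sigma> * sqrt (2 * ln (4 * real T / \<delta>))))"
proof -
  note P = assms(1)
  interpret prob_space M by (rule P)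
  note fB = assms(4) and sg = assms(5) and s1 = assms(6) and d0 = assms(7) and d1 = assms(8)
  note dist = assms(10) and psd = assms(11) and KB = assms(12) and gk = assms(13) and e1 = assms(14)
  note xqX = assms(15) and fbb = assms(16)
  define u where "u = sqrt (2 * ln (4 * real T / \<delta>))"
  define c where "c = \<sigma> * u"
  define e where "e = (real L + 1) * \<epsilon>"
  define Bad where "Bad \<tau> = {\<omega>\<in>space M. c < \<bar>\<zeta> \<tau> \<omega>\<bar>}" for \<tau>
  define E where "E = space M - (\<Union>\<tau>\<in>{1..T}. Bad \<tau>)"
  have det: "\<bar>post_mean k \<sigma> (\<lambda>\<tau>. xq \<tau> \<omega>) (\<lambda>\<tau>. f (xq \<tau> \<omega>) + \<zeta> \<tau> \<omega>) (fb t \<omega>) x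
               - post_mean (\<lambda>x x'. inner (grad x) (grad x')) \<sigma> (\<lambda>\<tau>. xq \<tau> \<omega>)
                   (\<lambda>\<tau>. f (xq \<tau> \<omega>) + \<zeta> \<tau> \<omega>) (fb t \<omega>) x\<bar>
              \<le> 2 * max 1 K\<^sub>0 * (real t ^ 2 * ((real L + 1) * \<epsilon>) / \<sigma> ^ 4)
                  * (B' + \<sigma> * sqrt (2 * ln (4 * real T / \<delta>)))"
    if \<omega>: "\<omega> \<in> space M" and zb: "\<forall>\<tau>\<in>{1..T}. \<bar>\<zeta> \<tau> \<omega>\<bar> \<le> c" and t: "t \<in> {1..T}" and x: "x \<in> X"
    and u0: "0 \<le> u"
    for \<omega> t x
  proof -
    define n where "n = fb t \<omega>"
    have nt: "Suc n \<le> t"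
    proof -
      have "fb t \<omega> \<le> t - 1" using fbb t \<omega> by blast
      moreover have "1 \<le> t" using t by simp
      ultimately show ?thesis unfolding n_def by arith
    qed
    have idx: "Suc i \<in> {1..T}" if "i < n" for i using that nt t by auto
    have pX: "xq (Suc i) \<omega> \<in> X" if "i < n" for i using xqX idx[OF that] \<omega> by blast
    have psdk: "\<forall>cc. 0 \<le> (\<Sum>i<n. \<Sum>j<n. cc i * cc j * k (xq (Suc i) \<omega>) (xq (Suc j) \<omega>))"
    proof
      fix cc :: "nat \<Rightarrow> real"
      have H: "\<forall>n xs (c :: nat \<Rightarrow> real). (\<forall>i<n. xs i \<in> X) \<longrightarrow>
          0 \<le> (\<Sum>i<n. \<Sum>j<n. c i * c j * k (xs i) (xs j))"
        using psd unfolding psd_kernel_on_def by blast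
      have "\<forall>i<n. (\<lambda>i. xq (Suc i) \<omega>) i \<in> X" using pX by simp
      then show "0 \<le> (\<Sum>i<n. \<Sum>j<n. cc i * cc j * k (xq (Suc i) \<omega>) (xq (Suc j) \<omega>))"
        using spec[OF spec[OF spec[OF H, of n], of "\<lambda>i. xq (Suc i) \<omega>"], of cc] by simp
    qed
    have psdg: "\<forall>cc. 0 \<le> (\<Sum>i<n. \<Sum>j<n. cc i * cc j * inner (grad (xq (Suc i) \<omega>)) (grad (xq (Suc j) \<omega>)))"
    proof
      fix cc :: "nat \<Rightarrow> real"
      show "0 \<le> (\<Sum>i<n. \<Sum>j<n. cc i * cc j * inner (grad (xq (Suc i) \<omega>)) (grad (xq (Suc j) \<omega>)))"
        using gram_psd[where g="\<lambda>i. grad (xq (Suc i) \<omega>)" and cc=cc and n=n] by simp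
    qed
    obtain \<alpha> where \<alpha>: "\<forall>i<n. (\<Sum>j<n. k (xq (Suc i) \<omega>) (xq (Suc j) \<omega>) * \<alpha> j) + \<sigma>\<^sup>2 * \<alpha> i
          = f (xq (Suc i) \<omega>) + \<zeta> (Suc i) \<omega>"
      and pa: "post_mean k \<sigma> (\<lambda>\<tau>. xq \<tau> \<omega>) (\<lambda>\<tau>. f (xq \<tau> \<omega>) + \<zeta> \<tau> \<omega>) n x
          = (\<Sum>i<n. k x (xq (Suc i) \<omega>) * \<alpha> i)"
      using post_mean_sol[where n=n and kk=k and xs="\<lambda>\<tau>. xq \<tau> \<omega>" and \<sigma>=\<sigma> and ys="\<lambda>\<tau>. f (xq \<tau> \<omega>) + \<zeta> \<tau> \<omega>" and x=x] psdk sg by blast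
    obtain \<beta> where \<beta>: "\<forall>i<n. (\<Sum>j<n. inner (grad (xq (Suc i) \<omega>)) (grad (xq (Suc j) \<omega>)) * \<beta> j) + \<sigma>\<^sup>2 * \<beta> i
          = f (xq (Suc i) \<omega>) + \<zeta> (Suc i) \<omega>"
      and pb: "post_mean (\<lambda>x x'. inner (grad x) (grad x')) \<sigma> (\<lambda>\<tau>. xq \<tau> \<omega>) (\<lambda>\<tau>. f (xq \<tau> \<omega>) + \<zeta> \<tau> \<omega>) n x
          = (\<Sum>i<n. inner (grad x) (grad (xq (Suc i) \<omega>)) * \<beta> i)"
      using post_mean_sol[where n=n and kk="\<lambda>x x'. inner (grad x) (grad x')" and xs="\<lambda>\<tau>. xq \<tau> \<omega>" and \<sigma>=\<sigma>
          and ys="\<lambda>\<tau>. f (xq \<tau> \<omega>) + \<zeta> \<tau> \<omega>" and x=x] psdg sg by blast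
    have e0: "0 \<le> e" using gk x unfolding e_def by (meson abs_ge_zero order_trans)
    have K00: "0 \<le> K\<^sub>0" using psd_diag[OF psd x] KB x by (meson order_trans)
    have B0: "0 \<le> B'" using fB x by (meson abs_ge_zero order_trans)
    have e1': "e \<le> 1" using e1 by (simp add: e_def)
    have Y0: "0 \<le> B' + c" using B0 u0 sg by (simp add: c_def)
    have "\<bar>(\<Sum>i<n. k x (xq (Suc i) \<omega>) * \<alpha> i) - (\<Sum>i<n. inner (grad x) (grad (xq (Suc i) \<omega>)) * \<beta> i)\<bar>
        \<le> 2 * max 1 K\<^sub>0 * (real t ^ 2 * e / (\<sigma>\<^sup>2)\<^sup>2) * (B' + c)"
    proof (rule core_bound[OF psdk psdg \<alpha> \<beta>])
      show "\<forall>i<n. \<forall>j<n. \<bar>inner (grad (xq (Suc i) \<omega>)) (grad (xq (Suc j) \<omega>)) - k (xq (Suc i) \<omega>) (xq (Suc j) \<omega>)\<bar> \<le> e"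
        using gk pX unfolding e_def by blast
      show "\<forall>i<n. \<bar>inner (grad x) (grad (xq (Suc i) \<omega>)) - k x (xq (Suc i) \<omega>)\<bar> \<le> e"
        using gk pX x unfolding e_def by blast
      show "\<forall>i<n. \<bar>k x (xq (Suc i) \<omega>)\<bar> \<le> K\<^sub>0"
        using psd_entry_bound[OF psd KB x] pX by blast
      show "\<forall>i<n. \<bar>f (xq (Suc i) \<omega>) + \<zeta> (Suc i) \<omega>\<bar> \<le> B' + c"
      proof (intro allI impI)
        fix i assume i: "i < n"
        have "\<bar>f (xq (Suc i) \<omega>)\<bar> \<le> B'" using fB pX[OF i] by blast
        moreover have "\<bar>\<zeta> (Suc i) \<omega>\<bar> \<le> c" using zb idx[OF i] by blast
        ultimately show "\<bar>f (xq (Suc i) \<omega>) + \<zeta> (Suc i) \<omega>\<bar> \<le> B' + c" by linarith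
      qed
    qed (use sg s1 e0 e1' Y0 K00 nt in auto)
    moreover have s4: "(\<sigma>\<^sup>2)\<^sup>2 = \<sigma> ^ 4" by (simp only: power_mult[symmetric]) simp
    ultimately show ?thesis
      unfolding n_def[symmetric] pa pb e_def c_def u_def by (simp only: s4)
  qed
  show ?thesis
  proof (cases "T = 0")
    case True
    have "measure M (space M) = 1" by (rule prob_space)
    then show ?thesis using d0 True by (intro bexI[of _ "space M"]) auto
  next
    case False
    then have T1: "1 \<le> real T" by simp
    define q where "q = 4 * real T / \<delta>"
    have q4: "4 < q" unfolding q_def using d0 d1 T1 by (simp add: field_simps)
    have lnq: "3 / 4 \<le> ln q"
    proof -
      have "1 + (- ln q) \<le> exp (- ln q)" by (rule exp_ge_add_one_self)
      also have "exp (- ln q) = 1 / q" using q4 by (simp add: exp_minus inverse_eq_divide)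
      also have "1 / q \<le> 1 / 4" using q4 by (intro divide_left_mono) auto
      finally show ?thesis by simp
    qed
    have u': "u = sqrt (2 * ln q)" by (simp add: u_def q_def)
    have u1: "1 \<le> u" unfolding u' using lnq by simp
    have u2: "u\<^sup>2 = 2 * ln q" unfolding u' using lnq by simp
    have c0: "0 < c" unfolding c_def using sg u1 by simp
    have ex: "exp (-(c - 0)\<^sup>2 / (2 * \<sigma>\<^sup>2)) = 1 / q"
    proof -
      have "-(c - 0)\<^sup>2 / (2 * \<sigma>\<^sup>2) = - ln q"
        using u2 sg by (simp add: c_def power_mult_distrib field_simps)
      then show ?thesis using q4 by (simp add: exp_minus inverse_eq_divide)
    qed
    have sq: "sqrt (2 * pi * \<sigma>\<^sup>2) = sqrt (2 * pi) * \<sigma>" using sg by (simp add: real_sqrt_mult)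
    have nd: "normal_density 0 \<sigma> c = 1 / (sqrt (2 * pi) * \<sigma>) * (1 / q)"
      unfolding normal_density_def ex sq by simp
    have pi2: "2 \<le> sqrt (2 * pi)"
    proof -
      have "sqrt 4 \<le> sqrt (2 * pi)" using pi_gt3 by (intro real_sqrt_le_mono) simp
      then show ?thesis by simp
    qed
    have up: "2 \<le> u * sqrt (2 * pi)"
    proof -
      have "1 * 2 \<le> u * sqrt (2 * pi)" using u1 pi2 by (intro mult_mono) auto
      then show ?thesis by simp
    qed
    have bnd: "2 * (\<sigma>\<^sup>2 / c * normal_density 0 \<sigma> c) \<le> \<delta> / (4 * real T)"
    proof -
      have "2 * (\<sigma>\<^sup>2 / c * normal_density 0 \<sigma> c) = (2 / (u * sqrt (2 * pi))) * (1 / q)"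
        using sg u1 unfolding nd by (simp add: c_def field_simps power2_eq_square)
      also have "\<dots> \<le> 1 * (1 / q)"
      proof (rule mult_right_mono)
        show "2 / (u * sqrt (2 * pi)) \<le> 1" using up by (simp add: divide_le_eq)
      qed (use q4 in simp)
      also have "\<dots> = \<delta> / (4 * real T)" by (simp add: q_def)
      finally show ?thesis .
    qed
    have BadS: "Bad \<tau> \<in> sets M" and BadM: "measure M (Bad \<tau>) \<le> \<delta> / (4 * real T)"
      if "\<tau> \<in> {1..T}" for \<tau>
    proof -
      have D: "distributed M lborel (\<zeta> \<tau>) (normal_density 0 \<sigma>)" using dist that by blast
      show "Bad \<tau> \<in> sets M" unfolding Bad_def by (rule tail_abs(1)[OF P D sg c0])
      show "measure M (Bad \<tau>) \<le> \<delta> / (4 * real T)"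
        unfolding Bad_def using tail_abs(2)[OF P D sg c0] bnd by linarith
    qed
    have US: "(\<Union>\<tau>\<in>{1..T}. Bad \<tau>) \<in> sets M" using BadS by blast
    have ES: "E \<in> sets M" unfolding E_def using US by blast
    have "measure M (\<Union>\<tau>\<in>{1..T}. Bad \<tau>) \<le> (\<Sum>\<tau>\<in>{1..T}. measure M (Bad \<tau>))"
      by (rule measure_UNION_le) (use BadS in auto)
    also have "\<dots> \<le> (\<Sum>\<tau>\<in>{1..T}. \<delta> / (4 * real T))" by (rule sum_mono) (rule BadM)
    also have "\<dots> = \<delta> / 4" using T1 by simp
    finally have UM: "measure M (\<Union>\<tau>\<in>{1..T}. Bad \<tau>) \<le> \<delta> / 4" .
    have EM: "measure M E = 1 - measure M (\<Union>\<tau>\<in>{1..T}. Bad \<tau>)"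
      unfolding E_def by (rule prob_compl[OF US])
    show ?thesis
    proof (rule bexI[OF conjI ES])
      show "1 - \<delta> / 4 \<le> measure M E" using EM UM by linarith
      show "\<forall>\<omega>\<in>E. \<forall>t\<in>{1..T}. \<forall>x\<in>X.
              \<bar>post_mean k \<sigma> (\<lambda>\<tau>. xq \<tau> \<omega>) (\<lambda>\<tau>. f (xq \<tau> \<omega>) + \<zeta> \<tau> \<omega>) (fb t \<omega>) x
               - post_mean (\<lambda>x x'. inner (grad x) (grad x')) \<sigma> (\<lambda>\<tau>. xq \<tau> \<omega>)
                   (\<lambda>\<tau>. f (xq \<tau> \<omega>) + \<zeta> \<tau> \<omega>) (fb t \<omega>) x\<bar>
              \<le> 2 * max 1 K\<^sub>0 * (real t ^ 2 * ((real L + 1) * \<epsilon>) / \<sigma> ^ 4)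
                  * (B' + \<sigma> * sqrt (2 * ln (4 * real T / \<delta>)))"
      proof (intro ballI)
        fix \<omega> t x assume \<omega>E: "\<omega> \<in> E" and t: "t \<in> {1..T}" and x: "x \<in> X"
        have \<omega>: "\<omega> \<in> space M" using \<omega>E by (simp add: E_def)
        have zb: "\<forall>\<tau>\<in>{1..T}. \<bar>\<zeta> \<tau> \<omega>\<bar> \<le> c"
          using \<omega>E by (auto simp: E_def Bad_def not_less)
        show "\<bar>post_mean k \<sigma> (\<lambda>\<tau>. xq \<tau> \<omega>) (\<lambda>\<tau>. f (xq \<tau> \<omega>) + \<zeta> \<tau> \<omega>) (fb t \<omega>) x
               - post_mean (\<lambda>x x'. inner (grad x) (grad x')) \<sigma> (\<lambda>\<tau>. xq \<tau> \<omega>)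
                   (\<lambda>\<tau>. f (xq \<tau> \<omega>) + \<zeta> \<tau> \<omega>) (fb t \<omega>) x\<bar>
              \<le> 2 * max 1 K\<^sub>0 * (real t ^ 2 * ((real L + 1) * \<epsilon>) / \<sigma> ^ 4)
                  * (B' + \<sigma> * sqrt (2 * ln (4 * real T / \<delta>)))"
          by (rule det[OF \<omega> zb t x]) (use u1 in simp)
      qed
    qed
  qed
qed

end
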